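(* Let $M\ge1000$ and let $(r_1,s_1),\dots,(r_M,s_M)$ be $M$ different points of $[0,1]^2$ such that the sets $\{(r_j,s_j)\}$, $1\le j\le M$, are $\nu$-transverse for some $\nu>0$. For $j=1,\dots,M$ let $\pi^{(l)}_j$ be the orthogonal projection of $\mathbb{R}^9$ onto $W^{(l)}(r_j,s_j)$. Then for every linear subspace $V\subset\mathbb{R}^9$, $\dim(V)\le\frac{9}{2M}\sum_{j=1}^M\dim(\pi^{(1)}_j(V))$ and $\dim(V)\le\frac{9}{5M}\sum_{j=1}^M\dim(\pi^{(2)}_j(V))$.
   Context: $\Phi(r,s)=(r,s,r^2,rs,s^2,r^3,r^2s,rs^2,s^3)\in\mathbb{R}^9$. $W^{(1)}(r,s)=\langle\Phi_r(r,s),\Phi_s(r,s)\rangle$ and $W^{(2)}(r,s)=\langle\Phi_r,\Phi_s,\Phi_{rr},\Phi_{rs},\Phi_{ss}\rangle(r,s)$ (spans of partial derivatives). For a polynomial $P(r,s)$, $\|P\|$ is the $\ell^1$ sum of its coefficients. With $M\ge1000$, sets $S_1,\dots,S_M\subset[0,1]^2$ are $\nu$-transverse if for every polynomial $P$ with $\deg P\le100$ and $\|P\|=1$ and every choice of $\frac M{100}$ different sets $S_{i_1},\dots,S_{i_{M/100}}$ there is at least one $S_{i_j}$ with $|P(r,s)|\ge\nu$ for all $(r,s)\in S_{i_j}$. *)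

theory Defs
  imports "HOL-Analysis.Analysis"
begin

definition Phi :: "real \<Rightarrow> real \<Rightarrow> real^9" where
  "Phi r s = vector ([r, s, r^2, r * s, s^2, r^3, r^2 * s, r * s^2, s^3] :: real list)"

definition Phi_r :: "real \<Rightarrow> real \<Rightarrow> real^9" where
  "Phi_r r s = vector_derivative (\<lambda>t. Phi t s) (at r)"
definition Phi_s :: "real \<Rightarrow> real \<Rightarrow> real^9" where
  "Phi_s r s = vector_derivative (\<lambda>t. Phi r t) (at s)"
definition Phi_rr :: "real \<Rightarrow> real \<Rightarrow> real^9" where
  "Phi_rr r s = vector_derivative (\<lambda>t. Phi_r t s) (at r)"
definition Phi_rs :: "real \<Rightarrow> real \<Rightarrow> real^9" where
  "Phi_rs r s = vector_derivative (\<lambda>t. Phi_r r t) (at s)"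
definition Phi_ss :: "real \<Rightarrow> real \<Rightarrow> real^9" where
  "Phi_ss r s = vector_derivative (\<lambda>t. Phi_s r t) (at s)"

definition W1 :: "real \<Rightarrow> real \<Rightarrow> (real^9) set" where
  "W1 r s = span {Phi_r r s, Phi_s r s}"
definition W2 :: "real \<Rightarrow> real \<Rightarrow> (real^9) set" where
  "W2 r s = span {Phi_r r s, Phi_s r s, Phi_rr r s, Phi_rs r s, Phi_ss r s}"

definition orth_proj :: "(real^9) set \<Rightarrow> real^9 \<Rightarrow> real^9" where
  "orth_proj W x = (THE y. y \<in> W \<and> (\<forall>w\<in>W. orthogonal (x - y) w))"

text \<open>A polynomial P(r,s) of degree at most 100 is given by its coefficient
  function c, with c i j the coefficient of r^i s^j and c i j = 0 for i + j > 100.\<close>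
definition deg_le_100 :: "(nat \<Rightarrow> nat \<Rightarrow> real) \<Rightarrow> bool" where
  "deg_le_100 c \<longleftrightarrow> (\<forall>i j. 100 < i + j \<longrightarrow> c i j = 0)"
definition poly2 :: "(nat \<Rightarrow> nat \<Rightarrow> real) \<Rightarrow> real \<Rightarrow> real \<Rightarrow> real" where
  "poly2 c r s = (\<Sum>i\<le>100. \<Sum>j\<le>100. c i j * r^i * s^j)"
definition poly2_norm :: "(nat \<Rightarrow> nat \<Rightarrow> real) \<Rightarrow> real" where
  "poly2_norm c = (\<Sum>i\<le>100. \<Sum>j\<le>100. \<bar>c i j\<bar>)"

definition transverse :: "nat \<Rightarrow> real \<Rightarrow> (nat \<Rightarrow> (real \<times> real) set) \<Rightarrow> bool" where
  "transverse M \<nu> S \<longleftrightarrow>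
     (\<forall>c. deg_le_100 c \<and> poly2_norm c = 1 \<longrightarrow>
        (\<forall>I. I \<subseteq> {..<M} \<and> card I = nat \<lceil>real M / 100\<rceil> \<longrightarrow>
           (\<exists>j\<in>I. \<forall>(r, s)\<in>S j. \<bar>poly2 c r s\<bar> \<ge> \<nu>)))"

end

theory Submission
  imports Defs "HOL-Computational_Algebra.Polynomial"
begin

lemma exhaust_9:
  fixes x :: 9
  shows "x = 1 \<or> x = 2 \<or> x = 3 \<or> x = 4 \<or> x = 5 \<or> x = 6 \<or> x = 7 \<or> x = 8 \<or> x = 9"
proof (induct x)
  case (of_int z)
  then have "z = 0 \<or> z = 1 \<or> z = 2 \<or> z = 3 \<or> z = 4 \<or> z = 5 \<or> z = 6 \<or> z = 7 \<or> z = 8" by fastforce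
  then show ?case by auto
qed

lemma forall_9: "(\<forall>i::9. P i) \<longleftrightarrow> P 1 \<and> P 2 \<and> P 3 \<and> P 4 \<and> P 5 \<and> P 6 \<and> P 7 \<and> P 8 \<and> P 9"
  by (metis exhaust_9)

lemma exhaust_5:
  fixes x :: 5
  shows "x = 1 \<or> x = 2 \<or> x = 3 \<or> x = 4 \<or> x = 5"
proof (induct x)
  case (of_int z)
  then have "z = 0 \<or> z = 1 \<or> z = 2 \<or> z = 3 \<or> z = 4" by fastforce
  then show ?case by auto
qed

lemma UNIV_9: "(UNIV::9 set) = {1,2,3,4,5,6,7,8,9}"
proof -
  have "x \<in> {1,2,3,4,5,6,7,8,9}" for x :: 9 using exhaust_9[of x] by simp
  then show ?thesis by blast
qed

definition ei :: "9 \<Rightarrow> nat" where "ei i = (vector [1,0,2,1,0,3,2,1,0] :: nat^9) $ i"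
definition ej :: "9 \<Rightarrow> nat" where "ej i = (vector [0,1,0,1,2,0,1,2,3] :: nat^9) $ i"

fun ff :: "nat \<Rightarrow> nat \<Rightarrow> real" where
  "ff n 0 = 1" | "ff n (Suc k) = ff n k * (real n - real k)"

lemma ff_zero: "n < k \<Longrightarrow> ff n k = 0"
proof (induct k)
  case 0 then show ?case by simp
next
  case (Suc k) then show ?case by (cases "n = k") auto
qed

definition drow :: "nat \<times> nat \<Rightarrow> real \<times> real \<Rightarrow> real^9" where
  "drow al p = (\<chi> i. ff (ei i) (fst al) * ff (ej i) (snd al) * fst p ^ (ei i - fst al) * snd p ^ (ej i - snd al))"

lemma vec_deriv:
  fixes f :: "real \<Rightarrow> real^'n"
  assumes d: "\<And>i. ((\<lambda>x. f x $ i) has_real_derivative (f' $ i)) (at x)"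
  shows "(f has_vector_derivative f') (at x)"
proof -
  have be: "(\<Sum>i\<in>UNIV. (y $ i) *\<^sub>R axis i (1::real)) = y" for y :: "real^'n"
    by (simp add: vec_eq_iff axis_def if_distrib cong: if_cong)
  have eq: "f = (\<lambda>x. \<Sum>i\<in>UNIV. (f x $ i) *\<^sub>R axis i (1::real))"
    by (simp add: be)
  have eq2: "f' = (\<Sum>i\<in>UNIV. (f' $ i) *\<^sub>R axis i (1::real))"
    by (simp add: be)
  have "((\<lambda>x. \<Sum>i\<in>UNIV. (f x $ i) *\<^sub>R axis i (1::real)) has_vector_derivative (\<Sum>i\<in>UNIV. (f' $ i) *\<^sub>R axis i (1::real))) (at x)"
  proof (rule has_vector_derivative_sum)
    fix i
    show "((\<lambda>x. (f x $ i) *\<^sub>R axis i (1::real)) has_vector_derivative (f' $ i) *\<^sub>R axis i 1) (at x)"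
      using has_vector_derivative_scaleR[OF d[of i] has_vector_derivative_const[of "axis i (1::real)"]] by simp
  qed
  then show ?thesis using eq eq2 by metis
qed

lemma ff_step: "ff e a * (real (e - a) * r ^ (e - a - Suc 0)) = ff e (Suc a) * r ^ (e - Suc a)"
proof (cases "a \<le> e")
  case True then show ?thesis by (simp add: of_nat_diff)
next
  case False then show ?thesis by (simp add: ff_zero)
qed

lemma DERIV_cpow: "((\<lambda>t. c * t ^ n) has_real_derivative c * (real n * r ^ (n - Suc 0))) (at r)"
  by (rule DERIV_cmult) (rule DERIV_pow)

lemma drow_deriv_r: "((\<lambda>t. drow (a, b) (t, s)) has_vector_derivative drow (Suc a, b) (r, s)) (at r)"
proof (rule vec_deriv)
  fix i
  define c where "c = ff (ej i) b * s ^ (ej i - b) * ff (ei i) a"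
  have 1: "(\<lambda>t. drow (a, b) (t, s) $ i) = (\<lambda>t. c * t ^ (ei i - a))"
    by (rule ext) (simp add: drow_def c_def mult_ac)
  have 2: "drow (Suc a, b) (r, s) $ i = c * (real (ei i - a) * r ^ (ei i - a - Suc 0))"
  proof -
    have "drow (Suc a, b) (r, s) $ i = ff (ej i) b * s ^ (ej i - b) * (ff (ei i) (Suc a) * r ^ (ei i - Suc a))"
      by (simp add: drow_def mult_ac del: ff.simps)
    then show ?thesis by (simp add: ff_step[symmetric] c_def mult_ac del: ff.simps)
  qed
  show "((\<lambda>t. drow (a, b) (t, s) $ i) has_real_derivative drow (Suc a, b) (r, s) $ i) (at r)"
    unfolding 1 2 by (rule DERIV_cpow)
qed

lemma drow_deriv_s: "((\<lambda>t. drow (a, b) (r, t)) has_vector_derivative drow (a, Suc b) (r, s)) (at s)"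
proof (rule vec_deriv)
  fix i
  define c where "c = ff (ei i) a * r ^ (ei i - a) * ff (ej i) b"
  have 1: "(\<lambda>t. drow (a, b) (r, t) $ i) = (\<lambda>t. c * t ^ (ej i - b))"
    by (rule ext) (simp add: drow_def c_def mult_ac)
  have 2: "drow (a, Suc b) (r, s) $ i = c * (real (ej i - b) * s ^ (ej i - b - Suc 0))"
  proof -
    have "drow (a, Suc b) (r, s) $ i = ff (ei i) a * r ^ (ei i - a) * (ff (ej i) (Suc b) * s ^ (ej i - Suc b))"
      by (simp add: drow_def mult_ac del: ff.simps)
    then show ?thesis by (simp add: ff_step[symmetric] c_def mult_ac del: ff.simps)
  qed
  show "((\<lambda>t. drow (a, b) (r, t) $ i) has_real_derivative drow (a, Suc b) (r, s) $ i) (at s)"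
    unfolding 1 2 by (rule DERIV_cpow)
qed

lemma ei_simps: "ei 1 = 1" "ei 2 = 0" "ei 3 = 2" "ei 4 = 1" "ei 5 = 0" "ei 6 = 3" "ei 7 = 2" "ei 8 = 1" "ei 9 = 0"
  by (simp_all add: ei_def vector_def)
lemma ej_simps: "ej 1 = 0" "ej 2 = 1" "ej 3 = 0" "ej 4 = 1" "ej 5 = 2" "ej 6 = 0" "ej 7 = 1" "ej 8 = 2" "ej 9 = 3"
  by (simp_all add: ej_def vector_def)

lemma Phi_drow: "Phi r s = drow (0,0) (r,s)"
  unfolding vec_eq_iff forall_9 by (simp add: Phi_def drow_def ei_simps ej_simps vector_def power2_eq_square power3_eq_cube)

lemma Phi_r_drow: "Phi_r r s = drow (1,0) (r,s)"
  unfolding Phi_r_def Phi_drow using drow_deriv_r[of 0 0 s r] by (simp add: vector_derivative_at)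

lemma Phi_s_drow: "Phi_s r s = drow (0,1) (r,s)"
  unfolding Phi_s_def Phi_drow using drow_deriv_s[of 0 0 r s] by (simp add: vector_derivative_at)

lemma Phi_rr_drow: "Phi_rr r s = drow (2,0) (r,s)"
  unfolding Phi_rr_def Phi_r_drow using drow_deriv_r[of 1 0 s r] by (simp add: vector_derivative_at numeral_2_eq_2)

lemma Phi_rs_drow: "Phi_rs r s = drow (1,1) (r,s)"
  unfolding Phi_rs_def Phi_r_drow using drow_deriv_s[of 1 0 r s] by (simp add: vector_derivative_at)

lemma Phi_ss_drow: "Phi_ss r s = drow (0,2) (r,s)"
  unfolding Phi_ss_def Phi_s_drow using drow_deriv_s[of 0 1 r s] by (simp add: vector_derivative_at numeral_2_eq_2)

definition pf :: "nat \<Rightarrow> (real \<Rightarrow> real \<Rightarrow> real) \<Rightarrow> bool" where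
  "pf N f \<longleftrightarrow> (\<exists>Q :: real poly poly. degree Q \<le> N \<and> (\<forall>i. degree (coeff Q i) \<le> N) \<and>
      (\<forall>a b. f a b = poly (poly Q [:b:]) a))"

lemma pf_mono: "pf N f \<Longrightarrow> N \<le> K \<Longrightarrow> pf K f"
  unfolding pf_def by (meson order_trans)

lemma pf_const: "pf 0 (\<lambda>a b. c)"
  unfolding pf_def by (rule exI[of _ "[:[:c:]:]"]) (auto simp: coeff_pCons split: nat.split)

lemma pf_a: "pf 1 (\<lambda>a b. a)"
  unfolding pf_def by (rule exI[of _ "[:[:0,1:]:]"]) (auto simp: coeff_pCons split: nat.split)

lemma pf_b: "pf 1 (\<lambda>a b. b)"
  unfolding pf_def by (rule exI[of _ "[:0,1:]"]) (auto simp: coeff_pCons split: nat.split)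

lemma pf_add: "pf N f \<Longrightarrow> pf N g \<Longrightarrow> pf N (\<lambda>a b. f a b + g a b)"
  unfolding pf_def
proof (elim exE conjE)
  fix Q R :: "real poly poly"
  assume "degree Q \<le> N" "\<forall>i. degree (coeff Q i) \<le> N" "\<forall>a b. f a b = poly (poly Q [:b:]) a"
    "degree R \<le> N" "\<forall>i. degree (coeff R i) \<le> N" "\<forall>a b. g a b = poly (poly R [:b:]) a"
  then show "\<exists>Q. degree Q \<le> N \<and> (\<forall>i. degree (coeff Q i) \<le> N) \<and>
      (\<forall>a b. f a b + g a b = poly (poly Q [:b:]) a)"
    by (intro exI[of _ "Q + R"]) (auto intro: degree_add_le)
qed

lemma pf_mult: "pf N f \<Longrightarrow> pf K g \<Longrightarrow> pf (N + K) (\<lambda>a b. f a b * g a b)"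
  unfolding pf_def
proof (elim exE conjE)
  fix Q R :: "real poly poly"
  assume a: "degree Q \<le> N" "\<forall>i. degree (coeff Q i) \<le> N" "\<forall>a b. f a b = poly (poly Q [:b:]) a"
    "degree R \<le> K" "\<forall>i. degree (coeff R i) \<le> K" "\<forall>a b. g a b = poly (poly R [:b:]) a"
  have "degree (Q * R) \<le> N + K"
    using a by (meson add_mono degree_mult_le order_trans)
  moreover have "degree (coeff (Q * R) i) \<le> N + K" for i
    unfolding coeff_mult
  proof (rule degree_sum_le)
    fix p show "degree (coeff Q p * coeff R (i - p)) \<le> N + K"
      using a by (meson add_mono degree_mult_le order_trans)
  qed simp
  moreover have "f a b * g a b = poly (poly (Q * R) [:b:]) a" for a b
    using a by simp
  ultimately show "\<exists>Q. degree Q \<le> N + K \<and> (\<forall>i. degree (coeff Q i) \<le> N + K) \<and>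
      (\<forall>a b. f a b * g a b = poly (poly Q [:b:]) a)" by blast
qed

lemma pf_sum: "finite S \<Longrightarrow> (\<And>i. i \<in> S \<Longrightarrow> pf N (f i)) \<Longrightarrow> pf N (\<lambda>a b. \<Sum>i\<in>S. f i a b)"
proof (induct S rule: finite_induct)
  case empty
  then show ?case using pf_mono[OF pf_const[of 0]] by simp
next
  case (insert x F)
  then show ?case using pf_add[of N "f x" "\<lambda>a b. \<Sum>i\<in>F. f i a b"] by simp
qed

lemma pf_prod: "finite S \<Longrightarrow> (\<And>i. i \<in> S \<Longrightarrow> pf N (f i)) \<Longrightarrow> pf (N * card S) (\<lambda>a b. \<Prod>i\<in>S. f i a b)"
proof (induct S rule: finite_induct)
  case empty
  then show ?case using pf_const[of 1] by simp
next
  case (insert x F)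
  then have "pf (N + N * card F) (\<lambda>a b. f x a b * (\<Prod>i\<in>F. f i a b))"
    by (intro pf_mult) auto
  then show ?case using insert by simp
qed

lemma pf_pow: "pf N f \<Longrightarrow> pf (N * n) (\<lambda>a b. f a b ^ n)"
proof (induct n)
  case 0 then show ?case using pf_const[of 1] by simp
next
  case (Suc n)
  then show ?case using pf_mult[of N f "N * n" "\<lambda>a b. f a b ^ n"] by (simp add: add.commute)
qed

lemma sum_extend_100:
  fixes c :: "nat \<Rightarrow> nat \<Rightarrow> real"
  assumes "N \<le> 100" "\<And>i j. c i j \<noteq> 0 \<Longrightarrow> i \<le> N \<and> j \<le> N"
  shows "(\<Sum>i\<le>100. \<Sum>j\<le>100. c i j) = (\<Sum>i\<le>N. \<Sum>j\<le>N. c i j)"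
proof -
  have "(\<Sum>i\<le>100. \<Sum>j\<le>100. c i j) = (\<Sum>i\<le>100. \<Sum>j\<le>N. c i j)"
    by (rule sum.cong[OF refl], rule sum.mono_neutral_right) (use assms in auto)
  also have "\<dots> = (\<Sum>i\<le>N. \<Sum>j\<le>N. c i j)"
    by (rule sum.mono_neutral_right) (use assms in \<open>auto elim: sum.not_neutral_contains_not_neutral\<close>)
  finally show ?thesis .
qed

lemma pf_poly2:
  assumes "pf N f" "2 * N \<le> 100"
  shows "\<exists>c. deg_le_100 c \<and> (\<forall>a b. poly2 c a b = f a b)"
proof -
  obtain Q :: "real poly poly" where Q: "degree Q \<le> N" "\<forall>i. degree (coeff Q i) \<le> N"
      "\<forall>a b. f a b = poly (poly Q [:b:]) a"
    using assms(1) unfolding pf_def by blast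
  define c where "c i j = coeff (coeff Q j) i" for i j
  have cz: "c i j \<noteq> 0 \<Longrightarrow> i \<le> N \<and> j \<le> N" for i j
  proof -
    assume "c i j \<noteq> 0"
    then have "coeff Q j \<noteq> 0" "i \<le> degree (coeff Q j)" unfolding c_def by (auto intro: le_degree)
    then show ?thesis using Q(1,2) by (meson le_degree order_trans)
  qed
  have "deg_le_100 c" unfolding deg_le_100_def using cz assms(2) by fastforce
  moreover have "poly2 c a b = f a b" for a b
  proof -
    have "poly Q [:b:] = (\<Sum>j\<le>N. coeff Q j * [:b:] ^ j)"
      unfolding poly_altdef by (rule sum.mono_neutral_left) (use Q(1) in \<open>auto simp: coeff_eq_0\<close>)
    then have "f a b = (\<Sum>j\<le>N. poly (coeff Q j) a * b ^ j)"
      using Q(3) by (simp add: poly_sum)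
    also have "\<dots> = (\<Sum>j\<le>N. \<Sum>i\<le>N. c i j * a ^ i * b ^ j)"
    proof (rule sum.cong[OF refl])
      fix j
      have "poly (coeff Q j) a = (\<Sum>i\<le>N. c i j * a ^ i)"
        unfolding poly_altdef c_def by (rule sum.mono_neutral_left) (use Q(2) in \<open>auto simp: coeff_eq_0\<close>)
      then show "poly (coeff Q j) a * b ^ j = (\<Sum>i\<le>N. c i j * a ^ i * b ^ j)"
        by (simp add: sum_distrib_right)
    qed
    also have "\<dots> = (\<Sum>i\<le>N. \<Sum>j\<le>N. c i j * a ^ i * b ^ j)"
      by (rule sum.swap)
    also have "\<dots> = (\<Sum>i\<le>100. \<Sum>j\<le>100. c i j * a ^ i * b ^ j)"
      by (rule sum_extend_100[symmetric]) (use cz assms(2) in auto)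
    finally show ?thesis unfolding poly2_def by simp
  qed
  ultimately show ?thesis by blast
qed

lemma transverse_count:
  assumes tr: "transverse M \<nu> (\<lambda>j. {p j})" and nu: "\<nu> > 0"
    and f: "pf N f" "2 * N \<le> 100" and nz: "f a0 b0 \<noteq> 0"
  shows "card {j. j < M \<and> f (fst (p j)) (snd (p j)) = 0} < nat \<lceil>real M / 100\<rceil>"
proof (rule ccontr)
  let ?m = "nat \<lceil>real M / 100\<rceil>"
  let ?B = "{j. j < M \<and> f (fst (p j)) (snd (p j)) = 0}"
  assume "\<not> card ?B < ?m"
  then obtain I where I: "I \<subseteq> ?B" "card I = ?m"
    by (meson not_less obtain_subset_with_card_n)
  obtain c where c: "deg_le_100 c" "\<forall>a b. poly2 c a b = f a b"
    using pf_poly2[OF f] by blast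
  have "poly2_norm c \<noteq> 0"
  proof
    assume "poly2_norm c = 0"
    then have "\<forall>i\<le>100. \<forall>j\<le>100. c i j = 0"
      unfolding poly2_norm_def by (simp add: sum_nonneg_eq_0_iff)
    then have "poly2 c a0 b0 = 0" unfolding poly2_def by simp
    then show False using c nz by simp
  qed
  moreover have "poly2_norm c \<ge> 0" unfolding poly2_norm_def by (intro sum_nonneg) auto
  ultimately have np: "poly2_norm c > 0" by simp
  define c' where "c' i j = c i j / poly2_norm c" for i j
  have "deg_le_100 c'" using c(1) unfolding deg_le_100_def c'_def by simp
  moreover have "poly2_norm c' = 1"
    using np unfolding poly2_norm_def c'_def
    by (simp add: abs_div sum_divide_distrib[symmetric])
  moreover have p2: "poly2 c' a b = f a b / poly2_norm c" for a b
  proof -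
    have "poly2 c' a b = poly2 c a b / poly2_norm c"
      unfolding poly2_def c'_def by (simp add: sum_divide_distrib times_divide_eq_left)
    then show ?thesis using c(2) by simp
  qed
  ultimately obtain j where j: "j \<in> I" "\<forall>(r, s)\<in>{p j}. \<bar>poly2 c' r s\<bar> \<ge> \<nu>"
    using tr I unfolding transverse_def by (metis (no_types, lifting) I(1) dual_order.trans lessThan_iff mem_Collect_eq subsetI)
  then have "\<bar>poly2 c' (fst (p j)) (snd (p j))\<bar> \<ge> \<nu>" by (cases "p j") auto
  moreover have "f (fst (p j)) (snd (p j)) = 0" using j(1) I(1) by auto
  ultimately show False using p2 nu by simp
qed

definition Amap :: "('n \<Rightarrow> nat \<times> nat) \<Rightarrow> real \<times> real \<Rightarrow> real^9 \<Rightarrow> real^'n" where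
  "Amap al p v = (\<chi> k. drow (al k) p \<bullet> v)"

definition Wsp :: "('n \<Rightarrow> nat \<times> nat) \<Rightarrow> real \<times> real \<Rightarrow> (real^9) set" where
  "Wsp al p = span (range (\<lambda>k. drow (al k) p))"

lemma linear_Amap: "linear (Amap al p)"
  by (rule linearI) (simp_all add: Amap_def vec_eq_iff inner_add_right)

lemma orth_proj_props:
  fixes S :: "(real^9) set"
  shows "orth_proj (span S) x \<in> span S \<and> (\<forall>w\<in>span S. orthogonal (x - orth_proj (span S) x) w)"
proof -
  obtain y z where yz: "y \<in> span S" "\<And>w. w \<in> span S \<Longrightarrow> orthogonal z w" "x = y + z"
    by (rule orthogonal_subspace_decomp_exists[of S x]) blast
  have P: "y \<in> span S \<and> (\<forall>w\<in>span S. orthogonal (x - y) w)" using yz by simp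
  have U: "y' = y" if "y' \<in> span S \<and> (\<forall>w\<in>span S. orthogonal (x - y') w)" for y'
  proof -
    have d: "y - y' \<in> span S" using that yz(1) by (simp add: span_diff)
    have a: "inner (x - y') (y - y') = 0" "inner (x - y) (y - y') = 0"
      using that P d by (auto simp: orthogonal_def)
    have "y - y' = (x - y') - (x - y)" by simp
    then have "inner (y - y') (y - y') = inner (x - y') (y - y') - inner (x - y) (y - y')"
      by (metis inner_diff_left)
    then have "inner (y - y') (y - y') = 0" using a by simp
    then show ?thesis by simp
  qed
  have "orth_proj (span S) x = y"
    unfolding orth_proj_def by (rule the_equality, rule P, rule U)
  then show ?thesis using P by simp
qed

lemma Amap_orth_proj: "Amap al p (orth_proj (Wsp al p) v) = Amap al p v"
proof -
  have o: "\<forall>w\<in>Wsp al p. orthogonal (v - orth_proj (Wsp al p) v) w"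
    using orth_proj_props unfolding Wsp_def by blast
  have "drow (al k) p \<in> Wsp al p" for k unfolding Wsp_def by (rule span_base) auto
  then have "orthogonal (v - orth_proj (Wsp al p) v) (drow (al k) p)" for k
    using o by blast
  then have "drow (al k) p \<bullet> (v - orth_proj (Wsp al p) v) = 0" for k
    unfolding orthogonal_def by (simp add: inner_commute)
  then show ?thesis unfolding Amap_def vec_eq_iff by (simp add: inner_diff_right)
qed

lemma dim_Amap_le: "dim (Amap al p ` V) \<le> dim (orth_proj (Wsp al p) ` V)"
proof -
  have "Amap al p ` V = Amap al p ` (orth_proj (Wsp al p) ` V)"
    by (simp add: image_image Amap_orth_proj)
  also have "dim \<dots> \<le> dim (orth_proj (Wsp al p) ` V)" by (rule dim_image_le[OF linear_Amap])
  finally show ?thesis .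
qed

definition wt :: "9 \<Rightarrow> nat" where "wt i = ei i + 10 * ej i"

lemma wt_inj: "wt i = wt j \<Longrightarrow> i = j"
  using exhaust_9[of i] exhaust_9[of j] by (auto simp: wt_def ei_simps ej_simps)

lemma wt_le: "wt i \<le> 30"
  using exhaust_9[of i] by (auto simp: wt_def ei_simps ej_simps)

lemma lead_basis:
  fixes V :: "(real^9) set"
  assumes V: "subspace V"
  shows "\<exists>L U. (\<forall>l\<in>L. U l \<in> V \<and> U l $ l = 1 \<and> (\<forall>m. wt m < wt l \<longrightarrow> U l $ m = 0)) \<and> dim V \<le> card L"
proof -
  define L where "L = {l. \<exists>u\<in>V. u $ l = 1 \<and> (\<forall>m. wt m < wt l \<longrightarrow> u $ m = 0)}"
  define U where "U l = (SOME u. u \<in> V \<and> u $ l = 1 \<and> (\<forall>m. wt m < wt l \<longrightarrow> u $ m = 0))" for l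
  have U: "U l \<in> V \<and> U l $ l = 1 \<and> (\<forall>m. wt m < wt l \<longrightarrow> U l $ m = 0)" if "l \<in> L" for l
    using that unfolding L_def U_def by (metis (mono_tags, lifting) mem_Collect_eq someI_ex)
  have key: "\<forall>v\<in>V. (\<forall>m. wt m + K < 31 \<longrightarrow> v $ m = 0) \<longrightarrow> v \<in> span (U ` L)" for K
  proof (induct K)
    case 0
    show ?case
    proof (intro ballI impI)
      fix v :: "real^9" assume "\<forall>m. wt m + 0 < 31 \<longrightarrow> v $ m = 0"
      moreover have "wt i < 31" for i using wt_le[of i] by linarith
      ultimately have "v = 0" by (simp add: vec_eq_iff)
      then show "v \<in> span (U ` L)" by (simp add: span_zero)
    qed
  next
    case (Suc K)
    show ?case
    proof (intro ballI impI)
      fix v :: "real^9" assume vV: "v \<in> V" and z: "\<forall>m. wt m + Suc K < 31 \<longrightarrow> v $ m = 0"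
      show "v \<in> span (U ` L)"
      proof (cases "\<exists>m. wt m + K = 30 \<and> v $ m \<noteq> 0")
        case False
        have "\<forall>m. wt m + K < 31 \<longrightarrow> v $ m = 0"
        proof (intro allI impI)
          fix m' assume m': "wt m' + K < 31"
          show "v $ m' = 0"
          proof (cases "wt m' + K = 30")
            case True then show ?thesis using False by blast
          next
            case False then show ?thesis using z m' by simp
          qed
        qed
        then show ?thesis using Suc vV by blast
      next
        case True
        then obtain m where m: "wt m + K = 30" "v $ m \<noteq> 0" by blast
        have low: "wt m' < wt m \<Longrightarrow> v $ m' = 0" for m' using z m(1) by simp
        have "(inverse (v $ m)) *\<^sub>R v \<in> V" using vV V by (simp add: subspace_scale)
        then have mL: "m \<in> L" unfolding L_def using m(2) low by (intro CollectI bexI[of _ "(inverse (v $ m)) *\<^sub>R v"]) auto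
        define v' where "v' = v - (v $ m) *\<^sub>R U m"
        have v'V: "v' \<in> V" unfolding v'_def using U[OF mL] vV V by (simp add: subspace_diff subspace_scale)
        have "\<forall>m'. wt m' + K < 31 \<longrightarrow> v' $ m' = 0"
        proof (intro allI impI)
          fix m' assume "wt m' + K < 31"
          then have "wt m' \<le> wt m" using m(1) by linarith
          then have "wt m' < wt m \<or> m' = m" using wt_inj by (cases "wt m' = wt m") auto
          then show "v' $ m' = 0" using low U[OF mL] unfolding v'_def by auto
        qed
        then have "v' \<in> span (U ` L)" using Suc v'V by blast
        moreover have "U m \<in> span (U ` L)" using mL by (simp add: span_base)
        ultimately have "v' + (v $ m) *\<^sub>R U m \<in> span (U ` L)" by (simp add: span_add span_scale)
        then show ?thesis unfolding v'_def by simp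
      qed
    qed
  qed
  have "V \<subseteq> span (U ` L)" using key[of 31] by auto
  then have "dim V \<le> dim (span (U ` L))" by (rule dim_subset)
  also have "\<dots> = dim (U ` L)" by (rule dim_span)
  also have "\<dots> \<le> card (U ` L)" by (simp add: dim_le_card')
  also have "\<dots> \<le> card L" by (rule card_image_le) simp
  finally have B: "dim V \<le> card L" .
  have A: "\<forall>l\<in>L. U l \<in> V \<and> U l $ l = 1 \<and> (\<forall>m. wt m < wt l \<longrightarrow> U l $ m = 0)"
    using U by (intro ballI) 
  show ?thesis by (rule exI[where x=L], rule exI[where x=U], rule conjI[OF A B])
qed

definition Gm :: "('n \<Rightarrow> nat \<times> nat) \<Rightarrow> ('n \<Rightarrow> real^9) \<Rightarrow> real \<times> real \<Rightarrow> real^'n^'n" where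
  "Gm al Uf p = (\<chi> k j. drow (al k) p \<bullet> Uf j)"

lemma Gm_mult: "Gm al Uf p *v x = (\<Sum>j\<in>UNIV. x $ j *\<^sub>R Amap al p (Uf j))"
  by (simp add: vec_eq_iff matrix_vector_mult_def Gm_def Amap_def sum_component mult.commute)

lemma det_Gm_dim:
  fixes al :: "'n::finite \<Rightarrow> nat \<times> nat"
  assumes d: "det (Gm al Uf p) \<noteq> 0" and CV: "\<forall>j\<in>C. Uf j \<in> V"
  shows "card C \<le> dim (Amap al p ` V)"
proof -
  let ?G = "Gm al Uf p"
  let ?f = "\<lambda>j. Amap al p (Uf j)"
  have inj0: "x = 0" if "?G *v x = 0" for x
  proof -
    have "invertible ?G" using d by (simp add: invertible_det_nz)
    then obtain B where "B ** ?G = mat 1" unfolding invertible_def by blast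
    then show ?thesis using that matrix_left_invertible_ker by blast
  qed
  have injf: "inj_on ?f C"
  proof (rule inj_onI, rule ccontr)
    fix j1 j2 assume j: "j1 \<in> C" "j2 \<in> C" "?f j1 = ?f j2" "j1 \<noteq> j2"
    define x :: "real^'n" where "x = axis j1 1 - axis j2 1"
    have e: "x $ j *\<^sub>R ?f j = (if j = j1 then ?f j else 0) - (if j = j2 then ?f j else 0)" for j
      unfolding x_def using j(4) by (simp add: axis_def)
    have "?G *v x = ?f j1 - ?f j2"
      unfolding Gm_mult e by (simp add: sum_subtractf)
    then have "x = 0" using j(3) inj0 by simp
    moreover have "x $ j1 = 1" unfolding x_def using j(4) by (simp add: axis_def)
    ultimately show False by simp
  qed
  have indep: "independent (?f ` C)"
  proof
    assume "dependent (?f ` C)"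
    then obtain u where u: "\<exists>v\<in>?f ` C. u v \<noteq> 0" "(\<Sum>v\<in>?f ` C. u v *\<^sub>R v) = 0"
      using dependent_finite[of "?f ` C"] by auto
    define x :: "real^'n" where "x = (\<chi> j. if j \<in> C then u (?f j) else 0)"
    have "?G *v x = (\<Sum>j\<in>UNIV. (if j \<in> C then u (?f j) *\<^sub>R ?f j else 0))"
      unfolding Gm_mult x_def by (intro sum.cong) auto
    also have "\<dots> = (\<Sum>j\<in>C. u (?f j) *\<^sub>R ?f j)"
      by (simp add: sum.If_cases)
    also have "\<dots> = (\<Sum>v\<in>?f ` C. u v *\<^sub>R v)"
      using sum.reindex[OF injf, of "\<lambda>v. u v *\<^sub>R v"] by simp
    finally have "x = 0" using u(2) inj0 by simp
    have "\<forall>j\<in>C. u (?f j) = 0"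
    proof
      fix j assume "j \<in> C"
      have "x $ j = 0" using \<open>x = 0\<close> by simp
      then show "u (?f j) = 0" unfolding x_def using \<open>j \<in> C\<close> by simp
    qed
    then show False using u(1) by blast
  qed
  have "?f ` C \<subseteq> Amap al p ` V" using CV by auto
  then have "card (?f ` C) \<le> dim (Amap al p ` V)" using indep by (rule independent_card_le_dim)
  then show ?thesis using card_image[OF injf] by simp
qed

definition rw :: "nat \<times> nat \<Rightarrow> nat" where "rw al = fst al + 10 * snd al"

lemma drow_scale: "t ^ rw al * drow al (t, t ^ 10) $ m = t ^ wt m * drow al (1, 1) $ m"
proof (cases "fst al \<le> ei m \<and> snd al \<le> ej m")
  case True
  have "t ^ rw al * (t ^ (ei m - fst al) * (t ^ 10) ^ (ej m - snd al)) = t ^ wt m"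
    using True unfolding rw_def wt_def by (simp add: power_add[symmetric] power_mult[symmetric] algebra_simps)
  then show ?thesis unfolding drow_def by (simp add: algebra_simps)
next
  case False
  then have "ff (ei m) (fst al) = 0 \<or> ff (ej m) (snd al) = 0" by (auto intro: ff_zero)
  then show ?thesis unfolding drow_def by auto
qed

lemma degen:
  fixes al :: "'n::finite \<Rightarrow> nat \<times> nat" and \<sigma> :: "'n \<Rightarrow> 9"
  assumes lead1: "\<And>j. Uf j $ \<sigma> j = 1" and lead0: "\<And>j m. wt m < wt (\<sigma> j) \<Longrightarrow> Uf j $ m = 0"
    and H0: "det (\<chi> k j. drow (al k) (1,1) $ \<sigma> j) \<noteq> 0"
  shows "\<exists>a b. det (Gm al Uf (a, b)) \<noteq> 0"
proof -
  define hf where "hf t k j = (\<Sum>m\<in>UNIV. t ^ (wt m - wt (\<sigma> j)) * (drow (al k) (1,1) $ m * Uf j $ m))"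
    for t :: real and k j
  define H where "H t = (\<chi> k j. hf t k j)" for t
  have scale: "(\<Prod>k\<in>UNIV. t ^ rw (al k)) * det (Gm al Uf (t, t ^ 10)) = (\<Prod>j\<in>UNIV. t ^ wt (\<sigma> j)) * det (H t)"
    for t :: real
  proof -
    have e: "t ^ rw (al k) * (Gm al Uf (t, t ^ 10) $ k $ j) = t ^ wt (\<sigma> j) * hf t k j" for k j
    proof -
      have "t ^ rw (al k) * (Gm al Uf (t, t ^ 10) $ k $ j) = (\<Sum>m\<in>UNIV. t ^ wt m * (drow (al k) (1,1) $ m * Uf j $ m))"
        unfolding Gm_def inner_vec_def
        by (simp add: sum_distrib_left mult.assoc[symmetric] drow_scale)
      also have "\<dots> = t ^ wt (\<sigma> j) * hf t k j"
        unfolding hf_def sum_distrib_left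
      proof (rule sum.cong[OF refl])
        fix m
        show "t ^ wt m * (drow (al k) (1,1) $ m * Uf j $ m) =
            t ^ wt (\<sigma> j) * (t ^ (wt m - wt (\<sigma> j)) * (drow (al k) (1,1) $ m * Uf j $ m))"
        proof (cases "wt m < wt (\<sigma> j)")
          case True then show ?thesis using lead0 by simp
        next
          case False
          then have "t ^ wt (\<sigma> j) * t ^ (wt m - wt (\<sigma> j)) = t ^ wt m"
            by (simp add: power_add[symmetric])
          then show ?thesis by (simp add: mult.assoc[symmetric])
        qed
      qed
      finally show ?thesis .
    qed
    have "(\<Prod>k\<in>UNIV. t ^ rw (al k)) * det (Gm al Uf (t, t ^ 10))
        = det (\<chi> k. t ^ rw (al k) *s (Gm al Uf (t, t ^ 10) $ k))"
      by (simp add: det_rows_mul)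
    also have "(\<chi> k. t ^ rw (al k) *s (Gm al Uf (t, t ^ 10) $ k)) = transpose (\<chi> j. t ^ wt (\<sigma> j) *s (transpose (H t) $ j))"
      by (simp add: vec_eq_iff transpose_def H_def e)
    also have "det \<dots> = (\<Prod>j\<in>UNIV. t ^ wt (\<sigma> j)) * det (transpose (H t))"
      by (simp only: det_transpose det_rows_mul vec_lambda_eta)
    finally show ?thesis by simp
  qed
  have H0eq: "H 0 = (\<chi> k j. drow (al k) (1,1) $ \<sigma> j)"
  proof -
    have "hf 0 k j = drow (al k) (1,1) $ \<sigma> j" for k j
    proof -
      have "hf 0 k j = (\<Sum>m\<in>UNIV. if m = \<sigma> j then drow (al k) (1,1) $ m else 0)"
        unfolding hf_def
      proof (rule sum.cong[OF refl])
        fix m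
        show "0 ^ (wt m - wt (\<sigma> j)) * (drow (al k) (1,1) $ m * Uf j $ m) = (if m = \<sigma> j then drow (al k) (1,1) $ m else 0)"
        proof (cases "m = \<sigma> j")
          case True then show ?thesis using lead1 by simp
        next
          case False
          then have "wt m \<noteq> wt (\<sigma> j)" using wt_inj by blast
          then show ?thesis using False lead0[of m j] by (cases "wt m < wt (\<sigma> j)") auto
        qed
      qed
      then show ?thesis by simp
    qed
    then show ?thesis unfolding H_def by (simp add: vec_eq_iff)
  qed
  have lim: "((\<lambda>t. det (H t)) \<longlongrightarrow> det (H 0)) (at_right 0)"
  proof -
    have "((\<lambda>t. \<Sum>p\<in>{p. p permutes (UNIV::'n set)}. of_int (sign p) * (\<Prod>i\<in>UNIV. hf t i (p i)))
        \<longlongrightarrow> (\<Sum>p\<in>{p. p permutes (UNIV::'n set)}. of_int (sign p) * (\<Prod>i\<in>UNIV. hf 0 i (p i)))) (at_right 0)"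
      unfolding hf_def by (intro tendsto_intros)
    then show ?thesis unfolding det_def H_def by simp
  qed
  have "\<forall>\<^sub>F t in at_right 0. det (H t) \<noteq> 0"
    using tendsto_imp_eventually_ne[OF lim] H0 H0eq by simp
  moreover have "\<forall>\<^sub>F t in at_right (0::real). 0 < t" by (rule eventually_at_right_less)
  ultimately have "\<forall>\<^sub>F t in at_right (0::real). det (H t) \<noteq> 0 \<and> 0 < t" by (rule eventually_conj)
  then obtain t :: real where t: "det (H t) \<noteq> 0" "0 < t"
    using eventually_happens[of _ "at_right 0"] trivial_limit_at_right_real by blast
  have "(\<Prod>j\<in>UNIV. t ^ wt (\<sigma> j)) * det (H t) \<noteq> 0" using t by simp
  then have "det (Gm al Uf (t, t ^ 10)) \<noteq> 0" using scale[of t] by auto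
  then show ?thesis by blast
qed

lemma ei_le: "ei m \<le> 3" and ej_le: "ej m \<le> 3"
  using exhaust_9[of m] by (auto simp: ei_simps ej_simps)

lemma pf_drow: "pf 6 (\<lambda>a b. drow al (a, b) $ m)"
proof -
  have "pf (0 + 1 * (ei m - fst al) + 1 * (ej m - snd al))
     (\<lambda>a b. ff (ei m) (fst al) * ff (ej m) (snd al) * a ^ (ei m - fst al) * b ^ (ej m - snd al))"
    by (intro pf_mult pf_const pf_pow pf_a pf_b)
  moreover have "0 + 1 * (ei m - fst al) + 1 * (ej m - snd al) \<le> 6" using ei_le[of m] ej_le[of m] by simp
  ultimately show ?thesis unfolding drow_def by (simp add: pf_mono)
qed

lemma pf_Gm: "pf 6 (\<lambda>a b. Gm al Uf (a, b) $ k $ j)"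
proof -
  have "pf 6 (\<lambda>a b. \<Sum>m\<in>UNIV. drow (al k) (a, b) $ m * Uf j $ m)"
    by (rule pf_sum) (use pf_mult[OF pf_drow pf_const] in auto)
  then show ?thesis unfolding Gm_def inner_vec_def by simp
qed

lemma pf_det_Gm:
  fixes al :: "'n::finite \<Rightarrow> nat \<times> nat"
  shows "pf (6 * CARD('n)) (\<lambda>a b. det (Gm al Uf (a, b)))"
proof -
  have "pf (6 * CARD('n)) (\<lambda>a b. \<Sum>p\<in>{p. p permutes (UNIV::'n set)}. of_int (sign p) * (\<Prod>i\<in>UNIV. Gm al Uf (a, b) $ i $ p i))"
  proof (rule pf_sum)
    fix p :: "'n \<Rightarrow> 'n"
    have "pf (0 + 6 * card (UNIV::'n set)) (\<lambda>a b. of_int (sign p) * (\<Prod>i\<in>UNIV. Gm al Uf (a, b) $ i $ p i))"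
      by (intro pf_mult pf_const pf_prod) (auto intro: pf_Gm)
    then show "pf (6 * CARD('n)) (\<lambda>a b. of_int (sign p) * (\<Prod>i\<in>UNIV. Gm al Uf (a, b) $ i $ p i))" by simp
  qed (simp add: finite_permutations)
  then show ?thesis unfolding det_def by simp
qed

lemma generic:
  fixes al :: "'n::finite \<Rightarrow> nat \<times> nat" and V :: "(real^9) set" and p :: "nat \<Rightarrow> real \<times> real"
  assumes tr: "transverse M \<nu> (\<lambda>j. {p j})" and nu: "\<nu> > 0" and V: "subspace V"
    and cardn: "CARD('n) \<le> 8" and tV: "t \<le> dim V"
    and cert: "\<And>L. t \<le> card L \<Longrightarrow> \<exists>\<sigma>. det (\<chi> k j. drow (al k) (1,1) $ \<sigma> j) \<noteq> 0 \<and> \<rho> \<le> card {j. \<sigma> j \<in> L}"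
  shows "real \<rho> * (real M - real M / 100) \<le> (\<Sum>j<M. real (dim (orth_proj (Wsp al (p j)) ` V)))"
proof -
  obtain L U where LU: "\<forall>l\<in>L. U l \<in> V \<and> U l $ l = 1 \<and> (\<forall>m. wt m < wt l \<longrightarrow> U l $ m = 0)"
    and dL: "dim V \<le> card L"
    using lead_basis[OF V] by blast
  obtain \<sigma> :: "'n \<Rightarrow> 9" where \<sigma>: "det (\<chi> k j. drow (al k) (1,1) $ \<sigma> j) \<noteq> 0" "\<rho> \<le> card {j. \<sigma> j \<in> L}"
    using cert[of L] tV dL by auto
  define Uf where "Uf j = (if \<sigma> j \<in> L then U (\<sigma> j) else axis (\<sigma> j) 1)" for j
  have lead1: "Uf j $ \<sigma> j = 1" for j unfolding Uf_def using LU by auto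
  have lead0: "Uf j $ m = 0" if "wt m < wt (\<sigma> j)" for j m
  proof (cases "\<sigma> j \<in> L")
    case True then show ?thesis unfolding Uf_def using LU that by auto
  next
    case False
    then have "m \<noteq> \<sigma> j" using that by auto
    then show ?thesis unfolding Uf_def using False by (simp add: axis_def)
  qed
  obtain a0 b0 where ab: "det (Gm al Uf (a0, b0)) \<noteq> 0"
    using degen[OF lead1 lead0 \<sigma>(1)] by blast
  let ?f = "\<lambda>a b. det (Gm al Uf (a, b))"
  let ?m = "nat \<lceil>real M / 100\<rceil>"
  define B where "B = {j. j < M \<and> ?f (fst (p j)) (snd (p j)) = 0}"
  have cB: "card B < ?m"
  proof -
    have "2 * (6 * CARD('n)) \<le> 100" using cardn by simp
    from transverse_count[OF tr nu pf_det_Gm[of al Uf] this ab] show ?thesis unfolding B_def by simp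
  qed
  have good: "real \<rho> \<le> real (dim (orth_proj (Wsp al (p j)) ` V))" if "j < M" "j \<notin> B" for j
  proof -
    have "det (Gm al Uf (p j)) \<noteq> 0" using that unfolding B_def by simp
    then have "card {j. \<sigma> j \<in> L} \<le> dim (Amap al (p j) ` V)"
      by (rule det_Gm_dim) (auto simp: Uf_def LU)
    also have "\<dots> \<le> dim (orth_proj (Wsp al (p j)) ` V)" by (rule dim_Amap_le)
    finally show ?thesis using \<sigma>(2) by simp
  qed
  have "(\<Sum>j<M. real (dim (orth_proj (Wsp al (p j)) ` V))) \<ge> (\<Sum>j<M. if j \<in> B then 0 else real \<rho>)"
    by (intro sum_mono) (auto dest: good)
  moreover have "(\<Sum>j<M. if j \<in> B then 0 else real \<rho>) = real \<rho> * real (card ({..<M} - B))"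
    by (simp add: sum.If_cases Diff_eq)
  moreover have "card ({..<M} - B) = M - card B"
    by (subst card_Diff_subset) (auto simp: B_def)
  moreover have "card B \<le> M" using card_mono[of "{..<M}" B] by (auto simp: B_def)
  moreover have "real ?m < real M / 100 + 1" by linarith
  ultimately have "(\<Sum>j<M. real (dim (orth_proj (Wsp al (p j)) ` V))) \<ge> real \<rho> * (real M - real (card B))"
    by (simp add: of_nat_diff)
  moreover have "real (card B) \<le> real M / 100"
  proof -
    have "real (card B) + 1 \<le> real ?m" using cB by linarith
    then show ?thesis using \<open>real ?m < real M / 100 + 1\<close> by linarith
  qed
  ultimately show ?thesis
    by (smt (verit) mult_left_mono of_nat_0_le_iff)
qed

fun peel_ok :: "int list list \<Rightarrow> (nat \<times> nat) list \<Rightarrow> bool" where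
  "peel_ok T [] = True"
| "peel_ok T (sa # cs) = (T ! fst sa ! snd sa \<noteq> 0 \<and> list_all (\<lambda>sb. T ! fst sb ! snd sa = 0) cs \<and> peel_ok T cs)"

definition cert_ok :: "int list list \<Rightarrow> nat \<Rightarrow> nat \<Rightarrow> (nat \<times> nat) list \<Rightarrow> bool" where
  "cert_ok T n nY cs \<longleftrightarrow> length cs = n \<and> distinct (map fst cs) \<and> list_all (\<lambda>sa. fst sa < 9 \<and> snd sa < nY) cs \<and> peel_ok T cs"

definition check :: "int list list \<Rightarrow> nat \<Rightarrow> nat \<Rightarrow> nat \<Rightarrow> nat \<Rightarrow> (nat \<times> nat) list list \<Rightarrow> bool" where
  "check T n nY t \<rho> CS \<longleftrightarrow> list_all (cert_ok T n nY) CS \<and>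
     list_all (\<lambda>xs. length xs = t \<longrightarrow> list_ex (\<lambda>cs. \<rho> \<le> length (filter (\<lambda>sa. fst sa \<in> set xs) cs)) CS) (subseqs [0..<9])"

definition "Tab2 = ([[1, 0, 0, 0, 0, 1], [0, 1, 0, 0, 0, -2], [2, 0, 2, 0, 0, 0], [1, 1, 0, 1, 0, -3], [0, 2, 0, 0, 2, -2], [3, 0, 6, 0, 0, -3], [2, 1, 2, 2, 0, -6], [1, 2, 0, 2, 2, -5], [0, 3, 0, 0, 6, 0]] :: int list list)"
definition "CS2 = ([[(2,2), (3,3), (0,0), (4,4), (1,1)], [(7,4), (6,3), (1,1), (5,2), (0,0)], [(2,2), (3,3), (0,0), (1,5), (8,1)], [(6,3), (2,2), (0,0), (4,5), (8,1)], [(3,3), (8,4), (1,1), (5,5), (2,0)], [(2,2), (7,3), (0,0), (4,5), (8,1)], [(6,2), (7,4), (3,3), (0,0), (1,1)], [(3,3), (4,4), (1,1), (5,2), (0,0)], [(5,2), (7,3), (0,0), (4,5), (8,1)], [(2,2), (3,3), (0,0), (4,5), (8,1)], [(7,4), (6,3), (1,1), (5,5), (2,0)], [(3,3), (5,2), (0,0), (4,5), (8,1)], [(4,4), (6,2), (3,3), (0,0), (1,1)], [(3,3), (4,4), (1,1), (5,5), (2,0)]] :: (nat \<times> nat) list list)"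
definition "Tab1 = ([[1, 0], [0, 1], [2, 0], [1, 1], [0, 2], [3, 0], [2, 1], [1, 2], [0, 3]] :: int list list)"
definition "CS1 = ([[(0,0), (1,1)], [(3,1), (2,0)], [(4,1), (5,0)], [(6,0), (8,1)], [(7,1), (0,0)], [(7,0), (1,1)]] :: (nat \<times> nat) list list)"

definition idx9 :: "nat \<Rightarrow> 9" where "idx9 s = [1,2,3,4,5,6,7,8,9] ! s"

lemma idx9_bij: "bij_betw idx9 {..<9} UNIV"
proof -
  have "idx9 ` {..<9} = UNIV"
  proof -
    have "{..<9::nat} = {0,1,2,3,4,5,6,7,8}" by auto
    then show ?thesis unfolding idx9_def using UNIV_9 by simp
  qed
  moreover have "card (UNIV :: 9 set) = 9" by simp
  ultimately show ?thesis by (simp add: bij_betw_def eq_card_imp_inj_on)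
qed

definition Xv :: "('n \<Rightarrow> nat \<times> nat) \<Rightarrow> 9 \<Rightarrow> real^'n" where
  "Xv al l = (\<chi> k. drow (al k) (1,1) $ l)"

lemma peel_sound:
  fixes Yv :: "nat \<Rightarrow> real^'n" and X :: "nat \<Rightarrow> real^'n"
  assumes br: "\<And>s a. s < 9 \<Longrightarrow> a < nY \<Longrightarrow> real_of_int (T ! s ! a) = Yv a \<bullet> X s"
    and ok: "peel_ok T cs" "list_all (\<lambda>sa. fst sa < 9 \<and> snd sa < nY) cs"
  shows "(\<Sum>i<length cs. c i *\<^sub>R X (fst (cs ! i))) = 0 \<Longrightarrow> i < length cs \<Longrightarrow> c i = 0"
  using ok
proof (induct cs arbitrary: c i)
  case Nil then show ?case by simp
next
  case (Cons sa cs)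
  obtain s a where sa: "sa = (s, a)" by force
  have sum: "c 0 *\<^sub>R X s + (\<Sum>i<length cs. c (Suc i) *\<^sub>R X (fst (cs ! i))) = 0"
  proof -
    have "(\<Sum>i<Suc (length cs). c i *\<^sub>R X (fst ((sa # cs) ! i))) =
      c 0 *\<^sub>R X s + (\<Sum>i<length cs. c (Suc i) *\<^sub>R X (fst (cs ! i)))"
      by (subst sum.lessThan_Suc_shift) (simp add: sa)
    then show ?thesis using Cons.prems(1) by simp
  qed
  have bnd: "s < 9" "a < nY" "list_all (\<lambda>sa. fst sa < 9 \<and> snd sa < nY) cs" using Cons.prems(4) sa by auto
  have pk: "T ! s ! a \<noteq> 0" "list_all (\<lambda>sb. T ! fst sb ! a = 0) cs" "peel_ok T cs" using Cons.prems(3) sa by auto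
  have z: "Yv a \<bullet> X (fst (cs ! i)) = 0" if "i < length cs" for i
  proof -
    have "T ! fst (cs ! i) ! a = 0" "fst (cs ! i) < 9" using pk(2) bnd(3) that by (auto simp: list_all_length)
    then show ?thesis using br[of "fst (cs ! i)" a] bnd(2) by simp
  qed
  have "Yv a \<bullet> (c 0 *\<^sub>R X s + (\<Sum>i<length cs. c (Suc i) *\<^sub>R X (fst (cs ! i)))) = c 0 * (Yv a \<bullet> X s)"
    by (simp add: inner_add_right inner_sum_right z)
  then have "c 0 * (Yv a \<bullet> X s) = 0" using sum by simp
  moreover have "Yv a \<bullet> X s \<noteq> 0" using br[OF bnd(1,2)] pk(1) by simp
  ultimately have c0: "c 0 = 0" by simp
  then have rest: "(\<Sum>i<length cs. c (Suc i) *\<^sub>R X (fst (cs ! i))) = 0" using sum by simp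
  show ?case
  proof (cases i)
    case 0 then show ?thesis using c0 by simp
  next
    case (Suc i')
    then show ?thesis using Cons.hyps[of "\<lambda>i. c (Suc i)" i', OF rest] Cons.prems(2) pk(3) bnd(3) by simp
  qed
qed

lemma kernel_det:
  fixes A :: "real^'n^'n"
  assumes "\<And>x. A *v x = 0 \<Longrightarrow> x = 0"
  shows "det A \<noteq> 0"
proof -
  have "\<exists>B. B ** A = mat 1" using assms matrix_left_invertible_ker by blast
  then have "invertible A" using invertible_left_inverse by blast
  then show ?thesis by (simp add: invertible_det_nz)
qed

lemma cert_sound:
  fixes al :: "'n::finite \<Rightarrow> nat \<times> nat" and Yv :: "nat \<Rightarrow> real^'n" and L :: "9 set"
  assumes br: "\<And>s a. s < 9 \<Longrightarrow> a < nY \<Longrightarrow> real_of_int (T ! s ! a) = Yv a \<bullet> Xv al (idx9 s)"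
    and chk: "check T CARD('n) nY t \<rho> CS"
    and L: "t \<le> card L"
  shows "\<exists>\<sigma>. det (\<chi> k j. drow (al k) (1,1) $ \<sigma> j) \<noteq> 0 \<and> \<rho> \<le> card {j. \<sigma> j \<in> L}"
proof -
  define L' where "L' = {s. s < 9 \<and> idx9 s \<in> L}"
  have injI: "inj_on idx9 {..<9}" using idx9_bij by (simp add: bij_betw_def)
  have "L = idx9 ` L'"
  proof -
    have "idx9 ` {..<9} = UNIV" using idx9_bij by (simp add: bij_betw_def)
    then show ?thesis unfolding L'_def by auto
  qed
  moreover have "inj_on idx9 L'" using injI unfolding L'_def by (rule inj_on_subset) auto
  ultimately have cL': "card L' = card L" by (simp add: card_image)
  obtain L0 where L0: "L0 \<subseteq> L'" "card L0 = t"
    using L cL' by (metis obtain_subset_with_card_n)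
  have "L0 \<subseteq> set [0..<9]" using L0(1) unfolding L'_def by auto
  then obtain xs where xs: "xs \<in> set (subseqs [0..<9])" "set xs = L0"
    using subset_subseqs by blast
  have "distinct xs" using subseqs_distinctD[OF xs(1)] by simp
  then have lxs: "length xs = t" using xs(2) L0(2) distinct_card by metis
  obtain cs where cs: "cs \<in> set CS" "\<rho> \<le> length (filter (\<lambda>sa. fst sa \<in> set xs) cs)"
    using chk xs(1) lxs unfolding check_def list_all_iff list_ex_iff by blast
  have cok: "cert_ok T CARD('n) nY cs" using chk cs(1) unfolding check_def list_all_iff by blast
  then have lcs: "length cs = CARD('n)" and pk: "peel_ok T cs" "list_all (\<lambda>sa. fst sa < 9 \<and> snd sa < nY) cs"
    unfolding cert_ok_def by auto
  obtain h :: "nat \<Rightarrow> 'n" where h: "bij_betw h {0..<CARD('n)} UNIV"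
    using ex_bij_betw_nat_finite[of "UNIV :: 'n set"] by auto
  define g where "g = inv_into {0..<CARD('n)} h"
  have gh: "g (h i) = i" if "i < CARD('n)" for i
    using h that unfolding g_def bij_betw_def by (simp add: inv_into_f_f)
  have hsurj: "\<exists>i<CARD('n). j = h i" for j
    using h unfolding bij_betw_def by (metis atLeastLessThan_iff image_iff UNIV_I)
  define \<sigma> where "\<sigma> j = idx9 (fst (cs ! g j))" for j
  let ?A = "(\<chi> k j. drow (al k) (1,1) $ \<sigma> j) :: real^'n^'n"
  have Av: "?A *v x = (\<Sum>i<length cs. (x $ h i) *\<^sub>R Xv al (idx9 (fst (cs ! i))))" for x
  proof -
    have "?A *v x = (\<Sum>j\<in>UNIV. (x $ j) *\<^sub>R Xv al (\<sigma> j))"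
      by (simp add: vec_eq_iff matrix_vector_mult_def Xv_def sum_component mult.commute)
    also have "\<dots> = (\<Sum>i\<in>{0..<CARD('n)}. (x $ h i) *\<^sub>R Xv al (\<sigma> (h i)))"
      by (rule sum.reindex_bij_betw[OF h, symmetric])
    also have "\<dots> = (\<Sum>i<length cs. (x $ h i) *\<^sub>R Xv al (idx9 (fst (cs ! i))))"
      unfolding lcs \<sigma>_def by (intro sum.cong) (auto simp: gh)
    finally show ?thesis .
  qed
  have "det ?A \<noteq> 0"
  proof (rule kernel_det)
    fix x :: "real^'n" assume "?A *v x = 0"
    then have z: "(\<Sum>i<length cs. (x $ h i) *\<^sub>R (Xv al \<circ> idx9) (fst (cs ! i))) = 0" using Av by simp
    have "x $ h i = 0" if "i < CARD('n)" for i
      using peel_sound[of nY T Yv "Xv al \<circ> idx9" cs "\<lambda>i. x $ h i" i] br pk z that lcs by simp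
    then show "x = 0" using hsurj by (metis vec_eq_iff zero_index)
  qed
  moreover have "\<rho> \<le> card {j. \<sigma> j \<in> L}"
  proof -
    let ?S = "{i. i < length cs \<and> fst (cs ! i) \<in> set xs}"
    have "\<rho> \<le> card ?S" using cs(2) by (simp add: length_filter_conv_card)
    also have "card ?S = card (h ` ?S)"
      by (rule card_image[symmetric], rule inj_on_subset[of h "{0..<CARD('n)}"]) (use h lcs in \<open>auto simp: bij_betw_def\<close>)
    also have "\<dots> \<le> card {j. \<sigma> j \<in> L}"
    proof (rule card_mono)
      show "h ` ?S \<subseteq> {j. \<sigma> j \<in> L}"
      proof
        fix j assume "j \<in> h ` ?S"
        then obtain i where i: "i < length cs" "fst (cs ! i) \<in> set xs" "j = h i" by blast
        have "fst (cs ! i) \<in> L'" using i(2) xs(2) L0(1) by auto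
        then show "j \<in> {j. \<sigma> j \<in> L}" unfolding \<sigma>_def L'_def using i gh lcs by auto
      qed
    qed simp
    finally show ?thesis .
  qed
  ultimately show ?thesis by blast
qed

definition al1 :: "2 \<Rightarrow> nat \<times> nat" where "al1 k = (if k = 1 then (1,0) else (0,1))"
definition al2 :: "5 \<Rightarrow> nat \<times> nat" where
  "al2 k = (if k = 1 then (1,0) else if k = 2 then (0,1) else if k = 3 then (2,0) else if k = 4 then (1,1) else (0,2))"

lemma UNIV_5: "(UNIV::5 set) = {1,2,3,4,5}"
proof -
  have "x \<in> {1,2,3,4,5}" for x :: 5 using exhaust_5[of x] by simp
  then show ?thesis by blast
qed

lemma UNIV_2': "(UNIV::2 set) = {1,2}"
proof -
  have "x \<in> {1,2}" for x :: 2 using exhaust_2[of x] by simp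
  then show ?thesis by blast
qed

lemma five_distinct: "(1::5) \<noteq> 2" "(1::5) \<noteq> 3" "(1::5) \<noteq> 4" "(1::5) \<noteq> 5" "(2::5) \<noteq> 3" "(2::5) \<noteq> 4" "(2::5) \<noteq> 5"
  "(3::5) \<noteq> 4" "(3::5) \<noteq> 5" "(4::5) \<noteq> 5"
  by simp_all

lemma two_distinct: "(1::2) \<noteq> 2" by simp

definition Yv1 :: "nat \<Rightarrow> real^2" where "Yv1 a = (if a = 0 then axis 1 1 else axis 2 1)"
definition Yv2 :: "nat \<Rightarrow> real^5" where
  "Yv2 a = (if a = 0 then axis 1 1 else if a = 1 then axis 2 1 else if a = 2 then axis 3 1 else if a = 3 then axis 4 1
     else if a = 4 then axis 5 1 else vector [1, -2, -1, -2, 1])"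

lemma sum_UNIV_5: "(\<Sum>k\<in>(UNIV::5 set). f k) = f 1 + f 2 + f 3 + f 4 + f 5"
  unfolding UNIV_5 by (simp add: five_distinct add.assoc)

lemma chk1a: "check Tab1 2 2 1 1 CS1" by code_simp
lemma chk1b: "check Tab1 2 2 5 2 CS1" by code_simp
lemma chk2a: "check Tab2 5 6 1 1 CS2" by code_simp
lemma chk2b: "check Tab2 5 6 2 2 CS2" by code_simp
lemma chk2c: "check Tab2 5 6 4 3 CS2" by code_simp
lemma chk2d: "check Tab2 5 6 6 4 CS2" by code_simp
lemma chk2e: "check Tab2 5 6 8 5 CS2" by code_simp

lemma nat_less_9: "s < 9 \<Longrightarrow> s = 0 \<or> s = 1 \<or> s = 2 \<or> s = 3 \<or> s = 4 \<or> s = 5 \<or> s = 6 \<or> s = 7 \<or> s = 8" for s :: nat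
  by auto

lemma Xv_1: "Xv al1 l $ 1 = ff (ei l) 1" "Xv al1 l $ 2 = ff (ej l) 1"
  by (simp_all add: Xv_def al1_def drow_def)

lemma br1:
  assumes "s < 9" "a < 2"
  shows "real_of_int (Tab1 ! s ! a) = Yv1 a \<bullet> Xv al1 (idx9 s)"
proof -
  have "a = 0 \<or> a = 1" using assms by auto
  moreover note nat_less_9[OF assms(1)]
  ultimately show ?thesis
    by (elim disjE) (simp_all add: Yv1_def inner_axis' Xv_1 Tab1_def idx9_def ei_simps ej_simps One_nat_def)
qed

lemma Xv_2: "Xv al2 l $ 1 = ff (ei l) 1" "Xv al2 l $ 2 = ff (ej l) 1" "Xv al2 l $ 3 = ff (ei l) 2"
  "Xv al2 l $ 4 = ff (ei l) 1 * ff (ej l) 1" "Xv al2 l $ 5 = ff (ej l) 2"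
  by (simp_all add: Xv_def al2_def drow_def five_distinct)
lemma inner5: "(x::real^5) \<bullet> y = x$1 * y$1 + x$2 * y$2 + x$3 * y$3 + x$4 * y$4 + x$5 * y$5"
  unfolding inner_vec_def by (simp add: sum_UNIV_5)
lemma br2_all: "real_of_int (Tab2 ! 0 ! 0) = Yv2 0 \<bullet> Xv al2 (idx9 0)" "real_of_int (Tab2 ! 0 ! 1) = Yv2 1 \<bullet> Xv al2 (idx9 0)" "real_of_int (Tab2 ! 0 ! 2) = Yv2 2 \<bullet> Xv al2 (idx9 0)" "real_of_int (Tab2 ! 0 ! 3) = Yv2 3 \<bullet> Xv al2 (idx9 0)" "real_of_int (Tab2 ! 0 ! 4) = Yv2 4 \<bullet> Xv al2 (idx9 0)" "real_of_int (Tab2 ! 0 ! 5) = Yv2 5 \<bullet> Xv al2 (idx9 0)" "real_of_int (Tab2 ! 1 ! 0) = Yv2 0 \<bullet> Xv al2 (idx9 1)" "real_of_int (Tab2 ! 1 ! 1) = Yv2 1 \<bullet> Xv al2 (idx9 1)" "real_of_int (Tab2 ! 1 ! 2) = Yv2 2 \<bullet> Xv al2 (idx9 1)" "real_of_int (Tab2 ! 1 ! 3) = Yv2 3 \<bullet> Xv al2 (idx9 1)" "real_of_int (Tab2 ! 1 ! 4) = Yv2 4 \<bullet> Xv al2 (idx9 1)" "real_of_int (Tab2 ! 1 ! 5) = Yv2 5 \<bullet> Xv al2 (idx9 1)" "real_of_int (Tab2 ! 2 ! 0) = Yv2 0 \<bullet> Xv al2 (idx9 2)" "real_of_int (Tab2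 ! 2 ! 1) = Yv2 1 \<bullet> Xv al2 (idx9 2)" "real_of_int (Tab2 ! 2 ! 2) = Yv2 2 \<bullet> Xv al2 (idx9 2)" "real_of_int (Tab2 ! 2 ! 3) = Yv2 3 \<bullet> Xv al2 (idx9 2)" "real_of_int (Tab2 ! 2 ! 4) = Yv2 4 \<bullet> Xv al2 (idx9 2)" "real_of_int (Tab2 ! 2 ! 5) = Yv2 5 \<bullet> Xv al2 (idx9 2)" "real_of_int (Tab2 ! 3 ! 0) = Yv2 0 \<bullet> Xv al2 (idx9 3)" "real_of_int (Tab2 ! 3 ! 1) = Yv2 1 \<bullet> Xv al2 (idx9 3)" "real_of_int (Tab2 ! 3 ! 2) = Yv2 2 \<bullet> Xv al2 (idx9 3)" "real_of_int (Tab2 ! 3 ! 3) = Yv2 3 \<bullet> Xv al2 (idx9 3)" "real_of_int (Tab2 ! 3 ! 4) = Yv2 4 \<bullet> Xv al2 (idx9 3)" "real_of_int (Tab2 ! 3 ! 5) = Yv2 5 \<bullet> Xv al2 (idx9 3)" "real_of_int (Tab2 ! 4 ! 0) = Yv2 0 \<bullet> Xv al2 (idx9 4)" "real_of_int (Tab2 ! 4 ! 1) = Yv2 1 \<bullet> Xv al2 (idx9 4)" "real_of_int (Tab2 ! 4 ! 2) = Yv2 2 \<bullet> Xv al2 (idx9 4)" "real_of_int (Tab2 ! 4 ! 3) = Yv2 3 \<bullet> Xv al2 (idx9 4)" "real_of_int (Tab2 ! 4 ! 4) = Yv2 4 \<bullet> Xv al2 (idx9 4)" "real_of_int (Tab2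 ! 4 ! 5) = Yv2 5 \<bullet> Xv al2 (idx9 4)" "real_of_int (Tab2 ! 5 ! 0) = Yv2 0 \<bullet> Xv al2 (idx9 5)" "real_of_int (Tab2 ! 5 ! 1) = Yv2 1 \<bullet> Xv al2 (idx9 5)" "real_of_int (Tab2 ! 5 ! 2) = Yv2 2 \<bullet> Xv al2 (idx9 5)" "real_of_int (Tab2 ! 5 ! 3) = Yv2 3 \<bullet> Xv al2 (idx9 5)" "real_of_int (Tab2 ! 5 ! 4) = Yv2 4 \<bullet> Xv al2 (idx9 5)" "real_of_int (Tab2 ! 5 ! 5) = Yv2 5 \<bullet> Xv al2 (idx9 5)" "real_of_int (Tab2 ! 6 ! 0) = Yv2 0 \<bullet> Xv al2 (idx9 6)" "real_of_int (Tab2 ! 6 ! 1) = Yv2 1 \<bullet> Xv al2 (idx9 6)" "real_of_int (Tab2 ! 6 ! 2) = Yv2 2 \<bullet> Xv al2 (idx9 6)" "real_of_int (Tab2 ! 6 ! 3) = Yv2 3 \<bullet> Xv al2 (idx9 6)" "real_of_int (Tab2 ! 6 ! 4) = Yv2 4 \<bullet> Xv al2 (idx9 6)" "real_of_int (Tab2 ! 6 ! 5) = Yv2 5 \<bullet> Xv al2 (idx9 6)" "real_of_int (Tab2 ! 7 ! 0) = Yv2 0 \<bullet> Xv al2 (idx9 7)" "real_of_int (Tab2 ! 7 ! 1) = Yv2 1 \<bullet> Xv al2 (idx9 7)" "real_of_int (Tab2 ! 7 ! 2) = Yv2 2 \<bullet> Xv al2 (idx9 7)" "real_of_int (Tab2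 ! 7 ! 3) = Yv2 3 \<bullet> Xv al2 (idx9 7)" "real_of_int (Tab2 ! 7 ! 4) = Yv2 4 \<bullet> Xv al2 (idx9 7)" "real_of_int (Tab2 ! 7 ! 5) = Yv2 5 \<bullet> Xv al2 (idx9 7)" "real_of_int (Tab2 ! 8 ! 0) = Yv2 0 \<bullet> Xv al2 (idx9 8)" "real_of_int (Tab2 ! 8 ! 1) = Yv2 1 \<bullet> Xv al2 (idx9 8)" "real_of_int (Tab2 ! 8 ! 2) = Yv2 2 \<bullet> Xv al2 (idx9 8)" "real_of_int (Tab2 ! 8 ! 3) = Yv2 3 \<bullet> Xv al2 (idx9 8)" "real_of_int (Tab2 ! 8 ! 4) = Yv2 4 \<bullet> Xv al2 (idx9 8)" "real_of_int (Tab2 ! 8 ! 5) = Yv2 5 \<bullet> Xv al2 (idx9 8)"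
  by (simp_all add: Yv2_def inner5 Xv_2 Tab2_def idx9_def ei_simps ej_simps One_nat_def numeral_2_eq_2 vector_def axis_def five_distinct)

lemma br2:
  assumes "s < 9" "a < 6"
  shows "real_of_int (Tab2 ! s ! a) = Yv2 a \<bullet> Xv al2 (idx9 s)"
proof -
  have "a = 0 \<or> a = 1 \<or> a = 2 \<or> a = 3 \<or> a = 4 \<or> a = 5" using assms by auto
  moreover note nat_less_9[OF assms(1)]
  ultimately show ?thesis using br2_all by (elim disjE) (simp_all only:)
qed

lemma cert1:
  assumes "t = 1 \<and> \<rho> = 1 \<or> t = 5 \<and> \<rho> = 2" "t \<le> card L"
  shows "\<exists>\<sigma>. det (\<chi> k j. drow (al1 k) (1,1) $ \<sigma> j) \<noteq> 0 \<and> \<rho> \<le> card {j. \<sigma> j \<in> L}"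
  using assms(1)
proof (elim disjE conjE)
  assume "t = 1" "\<rho> = 1" then show ?thesis using cert_sound[OF br1, where t=1 and \<rho>=1 and CS=CS1 and L=L] chk1a assms(2) by simp
next
  assume "t = 5" "\<rho> = 2" then show ?thesis using cert_sound[OF br1, where t=5 and \<rho>=2 and CS=CS1 and L=L] chk1b assms(2) by simp
qed

lemma cert2:
  assumes "t = 1 \<and> \<rho> = 1 \<or> t = 2 \<and> \<rho> = 2 \<or> t = 4 \<and> \<rho> = 3 \<or> t = 6 \<and> \<rho> = 4 \<or> t = 8 \<and> \<rho> = 5" "t \<le> card L"
  shows "\<exists>\<sigma>. det (\<chi> k j. drow (al2 k) (1,1) $ \<sigma> j) \<noteq> 0 \<and> \<rho> \<le> card {j. \<sigma> j \<in> L}"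
  using assms(1)
proof (elim disjE conjE)
  assume "t = 1" "\<rho> = 1" then show ?thesis using cert_sound[OF br2, where t=1 and \<rho>=1 and CS=CS2 and L=L] chk2a assms(2) by simp
next
  assume "t = 2" "\<rho> = 2" then show ?thesis using cert_sound[OF br2, where t=2 and \<rho>=2 and CS=CS2 and L=L] chk2b assms(2) by simp
next
  assume "t = 4" "\<rho> = 3" then show ?thesis using cert_sound[OF br2, where t=4 and \<rho>=3 and CS=CS2 and L=L] chk2c assms(2) by simp
next
  assume "t = 6" "\<rho> = 4" then show ?thesis using cert_sound[OF br2, where t=6 and \<rho>=4 and CS=CS2 and L=L] chk2d assms(2) by simp
next
  assume "t = 8" "\<rho> = 5" then show ?thesis using cert_sound[OF br2, where t=8 and \<rho>=5 and CS=CS2 and L=L] chk2e assms(2) by simp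
qed

lemma surj1: "Amap al1 p ` UNIV = UNIV"
proof -
  obtain a b where p: "p = (a, b)" by force
  have "Amap al1 p (y$1 *\<^sub>R axis 1 1 + y$2 *\<^sub>R axis 2 1) $ k = y $ k" for y k
    using exhaust_2[of k] unfolding Amap_def p
    by (elim disjE) (simp_all add: al1_def inner_add_right inner_axis drow_def ei_simps ej_simps One_nat_def)
  then have "Amap al1 p (y$1 *\<^sub>R axis 1 1 + y$2 *\<^sub>R axis 2 1) = y" for y by (simp add: vec_eq_iff)
  then show ?thesis by (metis surjI surj_def)
qed

lemma surj2: "Amap al2 p ` UNIV = UNIV"
proof -
  obtain a b where p: "p = (a, b)" by force
  define v where "v y = (y$1 - a * y$3 - b * y$4) *\<^sub>R axis 1 1 + (y$2 - a * y$4 - b * y$5) *\<^sub>R axis 2 1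
      + (y$3 / 2) *\<^sub>R axis 3 1 + y$4 *\<^sub>R axis 4 1 + (y$5 / 2) *\<^sub>R axis (5::9) (1::real)" for y :: "real^5"
  have "Amap al2 p (v y) $ k = y $ k" for y k
    using exhaust_5[of k] unfolding Amap_def p v_def
    by (elim disjE) (simp_all add: al2_def five_distinct inner_add_right inner_axis drow_def ei_simps ej_simps
         One_nat_def numeral_2_eq_2 algebra_simps)
  then have "Amap al2 p (v y) = y" for y by (simp add: vec_eq_iff)
  then show ?thesis by (metis surjI surj_def)
qed

lemma fin_arith:
  fixes M S :: real and \<rho> d k :: nat
  assumes M: "0 < M" and S: "real \<rho> * (M - M / 100) \<le> S" and r: "100 * d * k \<le> 891 * \<rho>" and d: "0 < d"
  shows "real k \<le> 9 / (real d * M) * S"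
proof -
  have a: "real (100 * d * k) * M \<le> real (891 * \<rho>) * M"
  proof (rule mult_right_mono)
    show "real (100 * d * k) \<le> real (891 * \<rho>)" using r by (simp only: of_nat_le_iff)
  qed (use M in simp)
  have "real k * (real d * M) \<le> 9 * S"
    using a S by (simp add: algebra_simps)
  moreover have "0 < real d * M" using M d by simp
  ultimately show ?thesis by (simp add: pos_le_divide_eq mult.commute)
qed

lemma fin_arith9:
  fixes M S :: real and d :: nat
  assumes M: "0 < M" and S: "real d * M \<le> S" and d: "0 < d"
  shows "9 \<le> 9 / (real d * M) * S"
proof -
  have "0 < real d * M" using M d by simp
  then show ?thesis using S by (simp add: pos_le_divide_eq mult.commute)
qed

lemma full_case:
  fixes al :: "'n::finite \<Rightarrow> nat \<times> nat" and V :: "(real^9) set"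
  assumes V: "subspace V" and d9: "dim V = 9" and surj: "\<And>q. Amap al q ` UNIV = UNIV"
  shows "real CARD('n) * real M \<le> (\<Sum>j<M. real (dim (orth_proj (Wsp al (p j)) ` V)))"
proof -
  have "span V = UNIV" using d9 dim_eq_full[of V] by simp
  moreover have "span V = V" using V span_eq_iff by blast
  ultimately have VU: "V = UNIV" by simp
  have "CARD('n) \<le> dim (orth_proj (Wsp al (p j)) ` V)" for j
  proof -
    have "CARD('n) = dim (Amap al (p j) ` V)" using surj[of "p j"] VU by (simp add: dim_UNIV)
    also have "\<dots> \<le> dim (orth_proj (Wsp al (p j)) ` V)" by (rule dim_Amap_le)
    finally show ?thesis .
  qed
  then have "(\<Sum>j<M. real CARD('n)) \<le> (\<Sum>j<M. real (dim (orth_proj (Wsp al (p j)) ` V)))"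
    by (intro sum_mono) simp
  then show ?thesis by (simp add: mult.commute)
qed

lemma W1_eq: "W1 (fst q) (snd q) = Wsp al1 q"
proof -
  have "range (\<lambda>k. drow (al1 k) q) = {drow (1,0) q, drow (0,1) q}"
    unfolding UNIV_2' by (simp add: al1_def)
  then show ?thesis unfolding W1_def Wsp_def Phi_r_drow Phi_s_drow by simp
qed

lemma W2_eq: "W2 (fst q) (snd q) = Wsp al2 q"
proof -
  have "range (\<lambda>k. drow (al2 k) q) = {drow (1,0) q, drow (0,1) q, drow (2,0) q, drow (1,1) q, drow (0,2) q}"
    unfolding UNIV_5 by (simp add: al2_def five_distinct)
  then show ?thesis unfolding W2_def Wsp_def Phi_r_drow Phi_s_drow Phi_rr_drow Phi_rs_drow Phi_ss_drow by simp
qed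

lemma sum_nonneg_dims: "0 \<le> (\<Sum>j<M. real (dim (f j :: (real^'n) set)))"
  by (intro sum_nonneg) simp

theorem lemma6p2:
  fixes M :: nat and \<nu> :: real and p :: "nat \<Rightarrow> real \<times> real" and V :: "(real^9) set"
  assumes "M \<ge> 1000"
    and "inj_on p {..<M}"
    and "\<forall>j<M. p j \<in> {0..1} \<times> {0..1}"
    and "\<nu> > 0"
    and "transverse M \<nu> (\<lambda>j. {p j})"
    and "subspace V"
  shows "real (dim V) \<le> 9 / (2 * real M) *
            (\<Sum>j<M. real (dim (orth_proj (W1 (fst (p j)) (snd (p j))) ` V)))
       \<and> real (dim V) \<le> 9 / (5 * real M) *
            (\<Sum>j<M. real (dim (orth_proj (W2 (fst (p j)) (snd (p j))) ` V)))"
proof -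
  note tr = assms(5) and nu = assms(4) and V = assms(6)
  have M: "0 < real M" using assms(1) by simp
  have k9: "dim V \<le> 9"
    using dim_subset_UNIV[of V] by simp
  let ?S1 = "\<Sum>j<M. real (dim (orth_proj (Wsp al1 (p j)) ` V))"
  let ?S2 = "\<Sum>j<M. real (dim (orth_proj (Wsp al2 (p j)) ` V))"
  have A: "real (dim V) \<le> 9 / (2 * real M) * ?S1"
  proof -
    consider "dim V = 0" | "1 \<le> dim V \<and> dim V \<le> 4" | "5 \<le> dim V \<and> dim V \<le> 8" | "dim V = 9"
      using k9 by linarith
    then show ?thesis
    proof cases
      case 1
      have "0 \<le> 9 / (2 * real M) * ?S1" using M sum_nonneg_dims by (intro mult_nonneg_nonneg) auto
      then show ?thesis by (simp only: 1 of_nat_0)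
    next
      case 2
      have "real 1 * (real M - real M / 100) \<le> ?S1"
        by (rule generic[OF tr nu V, where t=1]) (use 2 in \<open>auto intro: cert1\<close>)
      from fin_arith[OF M this, of 2 "dim V"] 2 show ?thesis by simp
    next
      case 3
      have "real 2 * (real M - real M / 100) \<le> ?S1"
        by (rule generic[OF tr nu V, where t=5]) (use 3 in \<open>auto intro: cert1\<close>)
      from fin_arith[OF M this, of 2 "dim V"] 3 show ?thesis by simp
    next
      case 4
      have "real CARD(2) * real M \<le> ?S1" by (rule full_case[OF V 4 surj1])
      from fin_arith9[OF M this] 4 show ?thesis by simp
    qed
  qed
  have B: "real (dim V) \<le> 9 / (5 * real M) * ?S2"
  proof -
    consider "dim V = 0" | "dim V = 1" | "2 \<le> dim V \<and> dim V \<le> 3" | "4 \<le> dim V \<and> dim V \<le> 5"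
      | "6 \<le> dim V \<and> dim V \<le> 7" | "dim V = 8" | "dim V = 9"
      using k9 by linarith
    then show ?thesis
    proof cases
      case 1
      have "0 \<le> 9 / (5 * real M) * ?S2" using M sum_nonneg_dims by (intro mult_nonneg_nonneg) auto
      then show ?thesis by (simp only: 1 of_nat_0)
    next
      case 2
      have "real 1 * (real M - real M / 100) \<le> ?S2"
        by (rule generic[OF tr nu V, where t=1]) (use 2 in \<open>auto intro: cert2\<close>)
      from fin_arith[OF M this, of 5 "dim V"] 2 show ?thesis by simp
    next
      case 3
      have "real 2 * (real M - real M / 100) \<le> ?S2"
        by (rule generic[OF tr nu V, where t=2]) (use 3 in \<open>auto intro: cert2\<close>)
      from fin_arith[OF M this, of 5 "dim V"] 3 show ?thesis by simp
    next
      case 4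
      have "real 3 * (real M - real M / 100) \<le> ?S2"
        by (rule generic[OF tr nu V, where t=4]) (use 4 in \<open>auto intro: cert2\<close>)
      from fin_arith[OF M this, of 5 "dim V"] 4 show ?thesis by simp
    next
      case 5
      have "real 4 * (real M - real M / 100) \<le> ?S2"
        by (rule generic[OF tr nu V, where t=6]) (use 5 in \<open>auto intro: cert2\<close>)
      from fin_arith[OF M this, of 5 "dim V"] 5 show ?thesis by simp
    next
      case 6
      have "real 5 * (real M - real M / 100) \<le> ?S2"
        by (rule generic[OF tr nu V, where t=8]) (use 6 in \<open>auto intro: cert2\<close>)
      from fin_arith[OF M this, of 5 "dim V"] 6 show ?thesis by simp
    next
      case 7
      have "real CARD(5) * real M \<le> ?S2" by (rule full_case[OF V 7 surj2])
      from fin_arith9[OF M this] 7 show ?thesis by simp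
    qed
  qed
  show ?thesis using A B by (simp add: W1_eq W2_eq)
qed

end
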